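(* Let $A$ be an essential arrangement of affine hyperplanes in a real affine space $V$ and $f_0$ a non-constant affine-linear function on $V$, $H_0=\{f_0=0\}$. Let $\Delta$ be an unbounded domain of $A$ such that $tr(\Delta)$ is a bounded face at infinity with respect to $f_0$, and such that $f_0$ is unbounded on $\Delta\cap\{f_0>0\}$. Then $\Delta$ is a growing domain of $A$.
   Context: $A=\{H_i\}$ is a finite set of affine hyperplanes in $V$ having at least one point as an intersection of some of them (essential). Domains are the connected components of $V\setminus\bigcup H_i$, and faces are the connected components of $F\setminus\bigcup_{F\not\subset H_i}H_i$ for edges $F$ (nonempty intersections of the $H_i$). $\bar V=V\cup H_\infty$ is the projective completion, $\bar H$ the closure of $H$, and $\bar A=\{\bar H_i\}\cup\{H_\infty\}$, with faces defined likewise in $\bar V$. For an unbounded domain $\Delta$, $tr(\Delta)$ is the face of highest dimension among the faces of $\bar A$ lying in $H_\infty$ that are contained in $\bar\Delta\cap H_\infty$. A face $\Sigma\subset H_\infty$ of $\bar A$ is a bounded face at infinity if $\bar\Sigma\cap\bar H_0=\emptyset$. A domain is growing if it is unbounded and $f_0(x)\to+\infty$ as $x\to\infty$ within it. *)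

theory Defs
  imports "HOL-Analysis.Analysis"
begin

text \<open>A point at infinity of the
projective completion is a line through the origin of V (a direction up to nonzero scaling).
A subset of the hyperplane at infinity is represented by the cone in V - {0}
consisting of all nonzero vectors of the lines it contains.\<close>

definition hyperplane_arrangement :: "'a::euclidean_space set set \<Rightarrow> bool" where
  "hyperplane_arrangement A \<longleftrightarrow> finite A \<and>
     (\<forall>H\<in>A. \<exists>a b. a \<noteq> 0 \<and> H = {x. a \<bullet> x = b})"

definition essential :: "'a::euclidean_space set set \<Rightarrow> bool" where
  "essential A \<longleftrightarrow> (\<exists>S p. S \<subseteq> A \<and> \<Inter>S = {p})"

definition domain_of :: "'a::euclidean_space set set \<Rightarrow> 'a set \<Rightarrow> bool" where
  "domain_of A D \<longleftrightarrow> (\<exists>x. x \<notin> \<Union>A \<and> D = connected_component_set (- \<Union>A) x)"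

text \<open>Direction space of an affine set; for a hyperplane H, the points at infinity of its
projective closure are exactly the lines in dir H.\<close>
definition dir :: "'a::euclidean_space set \<Rightarrow> 'a set" where
  "dir H = {x - y | x y. x \<in> H \<and> y \<in> H}"

text \<open>Faces of the completed arrangement lying in H_inf: an edge lying in H_inf is
P(E) with E the intersection of the direction spaces of some subfamily S of A (S empty gives
H_inf itself); a face is a connected component (in projective space) of P(E) minus the
closures of the hyperplanes not containing it; as a cone, it is C \<union> -C with C a connected
component of E - {0} - (union of dir H with E not contained in dir H).\<close>
definition face_at_inf :: "'a::euclidean_space set set \<Rightarrow> 'a set \<Rightarrow> bool" where
  "face_at_inf A \<Sigma> \<longleftrightarrow> (\<exists>S x. S \<subseteq> A \<and>
     (let E = \<Inter>(dir ` S);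
          R = E - {0} - \<Union>{dir H | H. H \<in> A \<and> \<not> E \<subseteq> dir H}
      in x \<in> R \<and> \<Sigma> = connected_component_set R x \<union> uminus ` connected_component_set R x))"

text \<open>Projective dimension of a face at infinity represented as a cone.\<close>
definition face_dim :: "'a::euclidean_space set \<Rightarrow> int" where
  "face_dim \<Sigma> = aff_dim \<Sigma> - 1"

text \<open>Points at infinity in the projective closure of a subset S of V:
[0:v] is a limit of points [1:x_k] with x_k in S.\<close>
definition inf_closure :: "'a::euclidean_space set \<Rightarrow> 'a set" where
  "inf_closure S = {v. v \<noteq> 0 \<and> (\<exists>x::nat \<Rightarrow> 'a. (\<forall>k. x k \<in> S) \<and>
      filterlim (\<lambda>k. norm (x k)) at_top sequentially \<and>
      (((\<lambda>k. x k /\<^sub>R norm (x k)) \<longlonglongrightarrow> v /\<^sub>R norm v) \<or>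
       ((\<lambda>k. x k /\<^sub>R norm (x k)) \<longlonglongrightarrow> - (v /\<^sub>R norm v))))}"

text \<open>Projective closure of a subset of H_inf (given as a cone): [0:v] is a limit of
points [0:w_k] with w_k in the cone.\<close>
definition inf_set_closure :: "'a::euclidean_space set \<Rightarrow> 'a set" where
  "inf_set_closure \<Sigma> = {v. v \<noteq> 0 \<and> (\<exists>w::nat \<Rightarrow> 'a. (\<forall>k. w k \<in> \<Sigma> \<and> w k \<noteq> 0) \<and>
      (((\<lambda>k. w k /\<^sub>R norm (w k)) \<longlonglongrightarrow> v /\<^sub>R norm v) \<or>
       ((\<lambda>k. w k /\<^sub>R norm (w k)) \<longlonglongrightarrow> - (v /\<^sub>R norm v))))}"

text \<open>tr(D): the (unique) face of highest dimension among the faces at infinity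
contained in the closure of D at infinity.\<close>
definition is_tr :: "'a::euclidean_space set set \<Rightarrow> 'a set \<Rightarrow> 'a set \<Rightarrow> bool" where
  "is_tr A D \<Sigma> \<longleftrightarrow> face_at_inf A \<Sigma> \<and> \<Sigma> \<subseteq> inf_closure D \<and>
     (\<forall>\<Sigma>'. face_at_inf A \<Sigma>' \<and> \<Sigma>' \<subseteq> inf_closure D \<and> \<Sigma>' \<noteq> \<Sigma> \<longrightarrow> face_dim \<Sigma>' < face_dim \<Sigma>)"

text \<open>Bounded face at infinity w.r.t. f0: the closure of the face does not meet the closure
of H0 = {f0 = 0}, whose points at infinity are the lines in dir H0.\<close>
definition bounded_face_at_inf ::
    "'a::euclidean_space set set \<Rightarrow> ('a \<Rightarrow> real) \<Rightarrow> 'a set \<Rightarrow> bool" where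
  "bounded_face_at_inf A f0 \<Sigma> \<longleftrightarrow> face_at_inf A \<Sigma> \<and>
     inf_set_closure \<Sigma> \<inter> dir {x. f0 x = 0} = {}"

definition growing_domain ::
    "'a::euclidean_space set set \<Rightarrow> ('a \<Rightarrow> real) \<Rightarrow> 'a set \<Rightarrow> bool" where
  "growing_domain A f0 D \<longleftrightarrow> domain_of A D \<and> \<not> bounded D \<and>
     (\<forall>M. \<exists>R. \<forall>x\<in>D. norm x \<ge> R \<longrightarrow> f0 x \<ge> M)"

end

theory Submission
  imports Defs
begin


lemma dir_hyp:
  fixes a :: "'a::euclidean_space"
  assumes "a \<noteq> 0"
  shows "dir {x. a \<bullet> x = b} = {v. a \<bullet> v = 0}"
proof
  show "dir {x. a \<bullet> x = b} \<subseteq> {v. a \<bullet> v = 0}"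
    by (auto simp: dir_def inner_diff_right)
next
  show "{v. a \<bullet> v = 0} \<subseteq> dir {x. a \<bullet> x = b}"
  proof
    fix v assume v: "v \<in> {v. a \<bullet> v = 0}"
    define y where "y = (b / (a \<bullet> a)) *\<^sub>R a"
    have y: "a \<bullet> y = b" using assms by (simp add: y_def)
    have "a \<bullet> (y + v) = b" using y v by (simp add: inner_add_right)
    moreover have "v = (y + v) - y" by simp
    ultimately show "v \<in> dir {x. a \<bullet> x = b}" unfolding dir_def using y
      by blast
  qed
qed

lemma limL:
  fixes x :: "nat \<Rightarrow> 'a::euclidean_space"
  assumes le: "\<And>k. \<beta> \<le> a \<bullet> x k"
    and lim: "filterlim (\<lambda>k. norm (x k)) at_top sequentially"
    and w: "(\<lambda>k. x k /\<^sub>R norm (x k)) \<longlonglongrightarrow> w"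
  shows "0 \<le> a \<bullet> w"
proof -
  have 1: "(\<lambda>k. a \<bullet> (x k /\<^sub>R norm (x k))) \<longlonglongrightarrow> a \<bullet> w"
    using w by (intro tendsto_intros)
  have 2: "(\<lambda>k. \<beta> / norm (x k)) \<longlonglongrightarrow> 0"
    by (rule tendsto_divide_0[OF tendsto_const]) (rule filterlim_at_top_imp_at_infinity[OF lim])
  have ev: "\<forall>\<^sub>F k in sequentially. 0 < norm (x k)"
    using lim[unfolded filterlim_at_top_dense] by blast
  have "\<forall>\<^sub>F k in sequentially. \<beta> / norm (x k) \<le> a \<bullet> (x k /\<^sub>R norm (x k))"
    using ev
  proof eventually_elim
    case (elim k)
    then show ?case using le[of k] by (simp add: divide_right_mono divide_inverse_commute)
  qed
  then show ?thesis using tendsto_le[OF trivial_limit_sequentially 1 2] by blast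
qed

lemma subseq_dir:
  fixes x :: "nat \<Rightarrow> 'a::euclidean_space"
  assumes le: "\<And>k. real (Suc k) \<le> norm (x k)"
  shows "\<exists>r u. strict_mono r \<and> norm u = 1 \<and> ((\<lambda>k. x (r k) /\<^sub>R norm (x (r k))) \<longlonglongrightarrow> u)
     \<and> filterlim (\<lambda>k. norm (x (r k))) at_top sequentially"
proof -
  have ev: "\<forall>\<^sub>F k in sequentially. real k \<le> norm (x k)"
  proof (rule always_eventually, rule allI)
    fix k show "real k \<le> norm (x k)" using le[of k] by linarith
  qed
  have lim: "filterlim (\<lambda>k. norm (x k)) at_top sequentially"
    by (rule filterlim_at_top_mono[OF filterlim_real_sequentially ev])
  have sph: "\<forall>k. x k /\<^sub>R norm (x k) \<in> sphere 0 1"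
  proof
    fix k have "norm (x k) > 0" using le[of k] of_nat_0_le_iff[of k] by linarith
    then show "x k /\<^sub>R norm (x k) \<in> sphere 0 1" by simp
  qed
  obtain u r where u: "u \<in> sphere 0 1" "strict_mono r" "((\<lambda>k. x k /\<^sub>R norm (x k)) \<circ> r) \<longlonglongrightarrow> u"
    by (rule seq_compactE[OF compact_imp_seq_compact[OF compact_sphere[of "0::'a" 1]] sph])
  have l2: "filterlim (\<lambda>k. norm (x (r k))) at_top sequentially"
    using filterlim_compose[OF lim filterlim_subseq[OF u(2)]] by (simp add: o_def)
  have l3: "(\<lambda>k. x (r k) /\<^sub>R norm (x (r k))) \<longlonglongrightarrow> u" using u(3) by (simp add: o_def)
  have n1: "norm u = 1" using u(1) by simp
  show ?thesis by (rule exI[of _ r], rule exI[of _ u]) (intro conjI u(2) n1 l3 l2)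
qed

lemma ray_dir:
  fixes x0 v :: "'a::euclidean_space"
  assumes "v \<noteq> 0"
  shows "filterlim (\<lambda>k. norm (x0 + real (Suc k) *\<^sub>R v)) at_top sequentially"
    and "(\<lambda>k. (x0 + real (Suc k) *\<^sub>R v) /\<^sub>R norm (x0 + real (Suc k) *\<^sub>R v)) \<longlonglongrightarrow> v /\<^sub>R norm v"
proof -
  define w where "w = (\<lambda>k. inverse (real (Suc k)) *\<^sub>R x0 + v)"
  have xw: "x0 + real (Suc k) *\<^sub>R v = real (Suc k) *\<^sub>R w k" for k
    by (simp add: w_def scaleR_add_right)
  have w: "w \<longlonglongrightarrow> v"
    unfolding w_def using tendsto_add[OF tendsto_scaleR[OF LIMSEQ_inverse_real_of_nat tendsto_const] tendsto_const, of x0 v] by simp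
  have nv: "norm v > 0" using assms by simp
  have ev: "\<forall>\<^sub>F k in sequentially. real k \<le> real (Suc k)"
    by (rule always_eventually) simp
  have sq: "filterlim (\<lambda>k. real (Suc k)) at_top sequentially"
    by (rule filterlim_at_top_mono[OF filterlim_real_sequentially ev])
  have f1: "filterlim (\<lambda>k. norm (w k) * real (Suc k)) at_top sequentially"
    by (rule filterlim_tendsto_pos_mult_at_top[OF tendsto_norm[OF w] nv sq])
  have nx: "norm (x0 + real (Suc k) *\<^sub>R v) = norm (w k) * real (Suc k)" for k
    unfolding xw by simp
  show "filterlim (\<lambda>k. norm (x0 + real (Suc k) *\<^sub>R v)) at_top sequentially"
    unfolding nx by (rule f1)
  have eq: "(x0 + real (Suc k) *\<^sub>R v) /\<^sub>R norm (x0 + real (Suc k) *\<^sub>R v) = w k /\<^sub>R norm (w k)" for k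
  proof -
    have "(x0 + real (Suc k) *\<^sub>R v) /\<^sub>R norm (x0 + real (Suc k) *\<^sub>R v)
        = (inverse (norm (w k) * real (Suc k)) * real (Suc k)) *\<^sub>R w k"
      unfolding nx unfolding xw by simp
    also have "inverse (norm (w k) * real (Suc k)) * real (Suc k) = inverse (norm (w k))"
      by (simp add: inverse_mult_distrib mult.assoc del: of_nat_Suc)
    finally show ?thesis by simp
  qed
  have "(\<lambda>k. w k /\<^sub>R norm (w k)) \<longlonglongrightarrow> v /\<^sub>R norm v"
    by (rule tendsto_scaleR[OF tendsto_inverse[OF tendsto_norm[OF w]] w]) (use nv in simp)
  then show "(\<lambda>k. (x0 + real (Suc k) *\<^sub>R v) /\<^sub>R norm (x0 + real (Suc k) *\<^sub>R v)) \<longlonglongrightarrow> v /\<^sub>R norm v"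
    unfolding eq .
qed

lemma inf_closure_uminus:
  assumes "v \<in> inf_closure S"
  shows "- v \<in> inf_closure S"
  using assms unfolding inf_closure_def by auto



theorem lemma3:
  fixes A :: "'a::euclidean_space set set" and f0 :: "'a \<Rightarrow> real" and D :: "'a set"
  assumes "hyperplane_arrangement A" and "essential A"
    and "\<exists>a0 c. a0 \<noteq> 0 \<and> (\<forall>x. f0 x = a0 \<bullet> x + c)"
    and "domain_of A D" and "\<not> bounded D"
    and "\<exists>\<Sigma>. is_tr A D \<Sigma> \<and> bounded_face_at_inf A f0 \<Sigma>"
    and "\<not> bdd_above (f0 ` (D \<inter> {x. f0 x > 0}))"
  shows "growing_domain A f0 D"
proof -
  obtain a0 c where a0: "a0 \<noteq> 0" and f0: "\<And>x. f0 x = a0 \<bullet> x + c" using assms(3) by blast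
  obtain x0 where x0: "x0 \<notin> \<Union>A" and Ddef: "D = connected_component_set (- \<Union>A) x0"
    using assms(4) unfolding domain_of_def by blast
  have finA: "finite A" using assms(1) unfolding hyperplane_arrangement_def by blast
  have "\<forall>H\<in>A. \<exists>p. fst p \<noteq> 0 \<and> H = {x. fst p \<bullet> x = snd p} \<and> fst p \<bullet> x0 > snd p"
  proof
    fix H assume H: "H \<in> A"
    then obtain a b where ab: "a \<noteq> 0" "H = {x. a \<bullet> x = b}"
      using assms(1) unfolding hyperplane_arrangement_def by blast
    have ne: "a \<bullet> x0 \<noteq> b" using x0 H ab by auto
    show "\<exists>p. fst p \<noteq> 0 \<and> H = {x. fst p \<bullet> x = snd p} \<and> fst p \<bullet> x0 > snd p"
    proof (cases "a \<bullet> x0 > b")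
      case True then show ?thesis using ab by (intro exI[of _ "(a,b)"]) auto
    next
      case False then have "(-a) \<bullet> x0 > -b" using ne by auto
      moreover have "H = {x. (-a) \<bullet> x = -b}" using ab by auto
      ultimately show ?thesis using ab by (intro exI[of _ "(-a,-b)"]) auto
    qed
  qed
  from bchoice[OF this] obtain p where p: "\<forall>H\<in>A. fst (p H) \<noteq> 0 \<and> H = {x. fst (p H) \<bullet> x = snd (p H)} \<and> fst (p H) \<bullet> x0 > snd (p H)"
    by blast
  define a where "a = (\<lambda>H. fst (p H))"
  define b where "b = (\<lambda>H. snd (p H))"
  have a_nz: "\<And>H. H \<in> A \<Longrightarrow> a H \<noteq> 0" and Heq: "\<And>H. H \<in> A \<Longrightarrow> H = {x. a H \<bullet> x = b H}"
    and ax0: "\<And>H. H \<in> A \<Longrightarrow> a H \<bullet> x0 > b H"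
    using p unfolding a_def b_def by blast+
  have memH: "x \<in> H \<longleftrightarrow> a H \<bullet> x = b H" if h: "H \<in> A" for H x
  proof -
    have "(x \<in> H) = (x \<in> {y. a H \<bullet> y = b H})"
      by (rule arg_cong[where f="\<lambda>S. x \<in> S", OF Heq[OF h]])
    also have "\<dots> = (a H \<bullet> x = b H)" by simp
    finally show ?thesis .
  qed
  have dirH: "dir H = {v. a H \<bullet> v = 0}" if h: "H \<in> A" for H
  proof -
    have "dir H = dir {x. a H \<bullet> x = b H}"
      by (rule arg_cong[where f=dir, OF Heq[OF h]])
    also have "\<dots> = {v. a H \<bullet> v = 0}" by (rule dir_hyp[OF a_nz[OF h]])
    finally show ?thesis .
  qed
  define Q where "Q = {x. \<forall>H\<in>A. a H \<bullet> x > b H}"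
  have x0Q: "x0 \<in> Q" using ax0 by (simp add: Q_def)
  have DQ: "D = Q"
  proof
    show "D \<subseteq> Q"
    proof
      fix y assume y: "y \<in> D"
      show "y \<in> Q" unfolding Q_def
      proof (rule ccontr)
        assume "y \<notin> {x. \<forall>H\<in>A. b H < a H \<bullet> x}"
        then obtain H where H: "H \<in> A" "a H \<bullet> y \<le> b H" by (auto simp: not_less)
        have conn: "connected D" unfolding Ddef by (rule connected_connected_component)
        have x0D: "x0 \<in> D" unfolding Ddef using x0 by simp
        obtain z where "z \<in> D" "a H \<bullet> z = b H"
          using connected_ivt_hyperplane[OF conn y x0D H(2)] ax0[OF H(1)] by auto
        moreover have "D \<subseteq> - \<Union>A" unfolding Ddef by (rule connected_component_subset)
        ultimately have "z \<in> D" "z \<in> H" "D \<subseteq> - \<Union>A" using memH[OF H(1)] by auto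
        then show False using H(1) by blast
      qed
    qed
    show "Q \<subseteq> D"
      unfolding Ddef
    proof (rule connected_component_maximal)
      show "x0 \<in> Q" by (rule x0Q)
      have "Q = (\<Inter>H\<in>A. {x. b H < a H \<bullet> x})" unfolding Q_def by auto
      then have "convex Q" by (simp add: convex_INT convex_halfspace_gt)
      then show "connected Q" by (rule convex_connected)
      show "Q \<subseteq> - \<Union>A"
      proof
        fix x assume xQ: "x \<in> Q"
        show "x \<in> - \<Union>A"
        proof
          assume "x \<in> \<Union>A"
          then obtain H where H: "H \<in> A" "x \<in> H" by blast
          then have "a H \<bullet> x = b H" using memH[OF H(1)] by simp
          moreover have "b H < a H \<bullet> x" using xQ H(1) unfolding Q_def by blast
          ultimately show False by simp
        qed
      qed
    qed
  qed
  define C where "C = {v. \<forall>H\<in>A. 0 \<le> a H \<bullet> v}"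
  have Ccone: "\<And>t v. v \<in> C \<Longrightarrow> 0 \<le> t \<Longrightarrow> t *\<^sub>R v \<in> C"
    by (simp add: C_def)
  have pointed: "v = 0" if vC: "v \<in> C" "-v \<in> C" for v
  proof -
    have v0: "a H \<bullet> v = 0" if H: "H \<in> A" for H
    proof -
      have "0 \<le> a H \<bullet> v" "0 \<le> a H \<bullet> (-v)" using vC H unfolding C_def by blast+
      then show ?thesis by simp
    qed
    obtain S q where S: "S \<subseteq> A" "\<Inter>S = {q}" using assms(2) unfolding essential_def by blast
    have "q + v \<in> \<Inter>S"
    proof
      fix H assume "H \<in> S"
      moreover have "q \<in> \<Inter>S" using S(2) by simp
      ultimately have "H \<in> A" "q \<in> H" using S by auto
      then show "q + v \<in> H" using memH[of H] v0[of H] by (simp add: inner_add_right)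
    qed
    then show "v = 0" using S by simp
  qed
  have QC: "w \<in> C" if xQ: "\<And>k. x k \<in> Q" and lim: "filterlim (\<lambda>k. norm (x k)) at_top sequentially"
      and wl: "(\<lambda>k. x k /\<^sub>R norm (x k)) \<longlonglongrightarrow> w" for x w
    unfolding C_def
  proof (intro CollectI ballI)
    fix H assume "H \<in> A"
    then have "\<And>k. b H \<le> a H \<bullet> x k" using xQ by (force simp: Q_def less_imp_le)
    then show "0 \<le> a H \<bullet> w" by (rule limL[OF _ lim wl])
  qed
  have infC: "v \<in> C \<or> -v \<in> C" if vI: "v \<in> inf_closure D" for v
  proof -
    obtain x where x: "\<And>k. x k \<in> Q" "filterlim (\<lambda>k. norm (x k)) at_top sequentially"
      and l: "((\<lambda>k. x k /\<^sub>R norm (x k)) \<longlonglongrightarrow> v /\<^sub>R norm v) \<or>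
       ((\<lambda>k. x k /\<^sub>R norm (x k)) \<longlonglongrightarrow> - (v /\<^sub>R norm v))" and v0: "v \<noteq> 0"
      using vI unfolding inf_closure_def DQ by blast
    have vv: "v = norm v *\<^sub>R (v /\<^sub>R norm v)" using v0 by simp
    from l show ?thesis
    proof
      assume "(\<lambda>k. x k /\<^sub>R norm (x k)) \<longlonglongrightarrow> v /\<^sub>R norm v"
      then have "v /\<^sub>R norm v \<in> C" using QC x by blast
      then have "v \<in> C" using Ccone[of "v /\<^sub>R norm v" "norm v"] vv by simp
      then show ?thesis by simp
    next
      assume "(\<lambda>k. x k /\<^sub>R norm (x k)) \<longlonglongrightarrow> - (v /\<^sub>R norm v)"
      then have "- (v /\<^sub>R norm v) \<in> C" using QC x by blast
      then have "-v \<in> C" using Ccone[of "- (v /\<^sub>R norm v)" "norm v"] vv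
        by (metis norm_ge_zero scaleR_minus_right)
      then show ?thesis by simp
    qed
  qed
  have CinfD: "v \<in> inf_closure D" if v: "v \<in> C" "v \<noteq> 0" for v
  proof -
    have "x0 + real (Suc k) *\<^sub>R v \<in> Q" for k
      unfolding Q_def
    proof (intro CollectI ballI)
      fix H assume H: "H \<in> A"
      have "0 \<le> real (Suc k) * (a H \<bullet> v)" using v(1) H unfolding C_def by simp
      moreover have "b H < a H \<bullet> x0" using ax0[OF H] .
      ultimately show "b H < a H \<bullet> (x0 + real (Suc k) *\<^sub>R v)" by (simp add: inner_add_right)
    qed
    note xq = this
    show "v \<in> inf_closure D" unfolding inf_closure_def DQ
      apply (intro CollectI conjI[OF v(2)] exI[of _ "\<lambda>k. x0 + real (Suc k) *\<^sub>R v"])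
      using ray_dir[OF v(2), of x0] xq by blast
  qed
  have exy: "\<exists>y. y \<in> D \<and> f0 y > norm a0 * real (Suc k) + c" for k
  proof (rule ccontr)
    assume "\<not> (\<exists>y. y \<in> D \<and> f0 y > norm a0 * real (Suc k) + c)"
    then have "\<forall>z\<in>f0 ` (D \<inter> {x. f0 x > 0}). z \<le> norm a0 * real (Suc k) + c"
      by (auto simp: not_less)
    then have "bdd_above (f0 ` (D \<inter> {x. f0 x > 0}))" unfolding bdd_above_def by blast
    then show False using assms(7) by blast
  qed
  define y where "y = (\<lambda>k. SOME y. y \<in> D \<and> f0 y > norm a0 * real (Suc k) + c)"
  have y0: "y k \<in> D \<and> f0 (y k) > norm a0 * real (Suc k) + c" for k
    unfolding y_def by (rule someI_ex[OF exy])
  have y: "\<And>k. y k \<in> D" "\<And>k. f0 (y k) > norm a0 * real (Suc k) + c"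
    using y0 by blast+
  have ny: "real (Suc k) \<le> norm (y k)" for k
  proof -
    have "norm a0 * real (Suc k) < a0 \<bullet> y k" using y(2)[of k] f0 by simp
    also have "\<dots> \<le> norm a0 * norm (y k)" by (rule norm_cauchy_schwarz)
    finally have "norm a0 * real (Suc k) < norm a0 * norm (y k)" .
    then have "real (Suc k) < norm (y k)" using a0 by (simp add: mult_less_cancel_left_pos)
    then show ?thesis by simp
  qed
  obtain r u' where r: "strict_mono r" "norm u' = 1" "(\<lambda>k. y (r k) /\<^sub>R norm (y (r k))) \<longlonglongrightarrow> u'"
    "filterlim (\<lambda>k. norm (y (r k))) at_top sequentially"
    using subseq_dir[OF ny] by blast
  have yQ: "\<And>k. y k \<in> Q" using y(1) unfolding DQ .
  have u'C: "u' \<in> C" by (rule QC[of "\<lambda>k. y (r k)" u', OF yQ r(4) r(3)])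
  have u'a0: "0 \<le> a0 \<bullet> u'"
  proof (rule limL[OF _ r(4) r(3)])
    fix k show "0 \<le> a0 \<bullet> y (r k)"
    proof -
      have "0 \<le> norm a0 * real (Suc (r k))" by simp
      then show ?thesis using y(2)[of "r k"] f0[of "y (r k)"] by linarith
    qed
  qed
  obtain \<Sigma> where tr: "is_tr A D \<Sigma>" and bf: "bounded_face_at_inf A f0 \<Sigma>" using assms(6) by blast
  define I where "I = {H\<in>A. \<forall>v\<in>C. a H \<bullet> v = 0}"
  define E where "E = \<Inter>(dir ` I)"
  have E_eq: "E = {v. \<forall>H\<in>I. a H \<bullet> v = 0}" unfolding E_def using dirH by (auto simp: I_def)
  have CE: "C \<subseteq> E" unfolding E_eq I_def by auto
  have "\<forall>H\<in>A-I. \<exists>v. v \<in> C \<and> a H \<bullet> v > 0"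
  proof
    fix H assume H: "H \<in> A - I"
    then obtain v where v: "v \<in> C" "a H \<bullet> v \<noteq> 0" unfolding I_def by blast
    have "0 \<le> a H \<bullet> v" using v(1) H unfolding C_def by blast
    then show "\<exists>v. v \<in> C \<and> a H \<bullet> v > 0" using v by (intro exI[of _ v]) simp
  qed
  from bchoice[OF this] obtain vH where vH0: "\<forall>H\<in>A-I. vH H \<in> C \<and> a H \<bullet> vH H > 0" by blast
  have vH: "\<And>H. H \<in> A-I \<Longrightarrow> vH H \<in> C \<and> a H \<bullet> vH H > 0" using vH0 by blast
  define vs where "vs = (\<Sum>H\<in>A-I. vH H)"
  have vsC: "vs \<in> C" unfolding C_def vs_def
    using vH by (auto simp: inner_sum_right C_def intro!: sum_nonneg)
  have vspos: "a H \<bullet> vs > 0" if H: "H \<in> A - I" for H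
  proof -
    have "a H \<bullet> vH H \<le> (\<Sum>H'\<in>A-I. a H \<bullet> vH H')"
      by (rule member_le_sum[OF H]) (use vH H finA in \<open>auto simp: C_def\<close>)
    then show ?thesis using vH[OF H] by (simp add: vs_def inner_sum_right)
  qed
  have AI_ne: "A - I \<noteq> {}"
  proof
    assume "A - I = {}"
    then have "\<forall>H\<in>A. a H \<bullet> u' = 0" using u'C unfolding I_def by blast
    then have "-u' \<in> C" by (simp add: C_def)
    then show False using pointed[OF u'C] r(2) by simp
  qed
  define P where "P = {v. (\<forall>H\<in>I. a H \<bullet> v = 0) \<and> (\<forall>H\<in>A-I. a H \<bullet> v > 0)}"
  define R where "R = E - {0} - \<Union>{dir H | H. H \<in> A \<and> \<not> E \<subseteq> dir H}"
  have notE: "(\<not> E \<subseteq> dir H) \<longleftrightarrow> H \<notin> I" if "H \<in> A" for H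
  proof
    assume "\<not> E \<subseteq> dir H" then show "H \<notin> I" using that dirH unfolding E_eq by auto
  next
    assume "H \<notin> I"
    then have "vs \<in> E" "vs \<notin> dir H" using vsC CE vspos[of H] that dirH by auto
    then show "\<not> E \<subseteq> dir H" by blast
  qed
  have Pnz: "v \<noteq> 0" if "v \<in> P" for v
    using AI_ne that unfolding P_def by force
  have PR: "P \<subseteq> R"
  proof
    fix v assume v: "v \<in> P"
    have "v \<in> E" using v unfolding P_def E_eq by simp
    moreover have "v \<notin> dir H" if H: "H \<in> A" "\<not> E \<subseteq> dir H" for H
    proof -
      have "H \<in> A - I" using notE[OF H(1)] H by blast
      then have "a H \<bullet> v > 0" using v unfolding P_def by blast
      then show ?thesis using dirH[OF H(1)] by simp
    qed
    ultimately show "v \<in> R" using Pnz[OF v] unfolding R_def by blast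
  qed
  have vsP: "vs \<in> P" using vsC vspos unfolding P_def I_def by auto
  define Op where "Op = (\<Inter>H\<in>A-I. {v. 0 < a H \<bullet> v})"
  have PEO: "P = E \<inter> Op" unfolding P_def E_eq Op_def by auto
  have convE: "convex E" unfolding E_eq
  proof -
    have "{v. \<forall>H\<in>I. a H \<bullet> v = 0} = (\<Inter>H\<in>I. {v. a H \<bullet> v = 0})" by auto
    then show "convex {v. \<forall>H\<in>I. a H \<bullet> v = 0}" by (simp add: convex_INT convex_hyperplane)
  qed
  have convP: "convex P" unfolding PEO Op_def
    by (intro convex_Int convE convex_INT) (simp add: convex_halfspace_gt)
  have openO: "open Op" unfolding Op_def using finA
    by (intro open_INT) (auto simp: open_halfspace_gt)
  have compP: "connected_component_set R vs = P"
  proof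
    show "P \<subseteq> connected_component_set R vs"
      by (rule connected_component_maximal[OF vsP convex_connected[OF convP] PR])
    show "connected_component_set R vs \<subseteq> P"
    proof
      fix v assume v: "v \<in> connected_component_set R vs"
      have cR: "connected_component_set R vs \<subseteq> R" by (rule connected_component_subset)
      have vsc: "vs \<in> connected_component_set R vs" using PR vsP by auto
      have "v \<in> E" using v cR unfolding R_def by blast
      then have "\<forall>H\<in>I. a H \<bullet> v = 0" unfolding E_eq by simp
      moreover have "a H \<bullet> v > 0" if H: "H \<in> A - I" for H
      proof (rule ccontr)
        assume "\<not> a H \<bullet> v > 0"
        then have "a H \<bullet> v \<le> 0" by simp
        then obtain z where z: "z \<in> connected_component_set R vs" "a H \<bullet> z = 0"
          using connected_ivt_hyperplane[OF connected_connected_component v vsc, of "a H" 0] vspos[OF H]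
          by auto
        have "z \<in> dir H" using z(2) dirH H by auto
        moreover have "\<not> E \<subseteq> dir H" using notE H by auto
        ultimately have "z \<notin> R" unfolding R_def using H by blast
        then show False using z(1) cR by blast
      qed
      ultimately show "v \<in> P" unfolding P_def by blast
    qed
  qed
  define F where "F = P \<union> uminus ` P"
  have faceF: "face_at_inf A F"
  proof -
    have "I \<subseteq> A \<and> vs \<in> R \<and> F = connected_component_set R vs \<union> uminus ` connected_component_set R vs"
      using PR vsP compP unfolding F_def I_def by auto
    then have h2: "I \<subseteq> A \<and> vs \<in> \<Inter>(dir ` I) - {0} - \<Union>{dir H | H. H \<in> A \<and> \<not> \<Inter>(dir ` I) \<subseteq> dir H}
       \<and> F = connected_component_set (\<Inter>(dir ` I) - {0} - \<Union>{dir H | H. H \<in> A \<and> \<not> \<Inter>(dir ` I) \<subseteq> dir H}) vs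
         \<union> uminus ` connected_component_set (\<Inter>(dir ` I) - {0} - \<Union>{dir H | H. H \<in> A \<and> \<not> \<Inter>(dir ` I) \<subseteq> dir H}) vs"
      unfolding R_def E_def .
    show ?thesis unfolding face_at_inf_def Let_def
      by (rule exI[of _ I], rule exI[of _ vs], rule h2)
  qed
  have PC: "P \<subseteq> C"
  proof
    fix v assume v: "v \<in> P"
    show "v \<in> C" unfolding C_def
    proof (intro CollectI ballI)
      fix H assume H: "H \<in> A"
      show "0 \<le> a H \<bullet> v"
      proof (cases "H \<in> I")
        case True then show ?thesis using v unfolding P_def by simp
      next
        case False then have "a H \<bullet> v > 0" using v H unfolding P_def by blast
        then show ?thesis by simp
      qed
    qed
  qed
  have FinfD: "F \<subseteq> inf_closure D"
    unfolding F_def using PC Pnz CinfD inf_closure_uminus by blast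
  have SigmaE: "\<Sigma> \<subseteq> E"
  proof
    fix v assume "v \<in> \<Sigma>"
    then have "v \<in> inf_closure D" using tr unfolding is_tr_def by blast
    then have "v \<in> C \<or> -v \<in> C" by (rule infC)
    then show "v \<in> E" using CE unfolding E_eq by force
  qed
  have affP: "aff_dim P = aff_dim E"
  proof -
    have "E \<inter> Op \<noteq> {}" using vsP PEO by blast
    then have "affine hull (E \<inter> Op) = affine hull E" by (rule affine_hull_convex_Int_open[OF convE openO])
    then show ?thesis unfolding PEO by (rule aff_dim_affine_hull2)
  qed
  have SF: "\<Sigma> = F"
  proof (rule ccontr)
    assume "\<Sigma> \<noteq> F"
    have "face_at_inf A F \<and> F \<subseteq> inf_closure D \<and> F \<noteq> \<Sigma> \<longrightarrow> face_dim F < face_dim \<Sigma>"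
      using tr unfolding is_tr_def by blast
    then have "face_dim F < face_dim \<Sigma>" using faceF FinfD \<open>\<Sigma> \<noteq> F\<close> by auto
    then have "aff_dim F < aff_dim \<Sigma>" unfolding face_dim_def by simp
    moreover have "aff_dim \<Sigma> \<le> aff_dim E" by (rule aff_dim_subset[OF SigmaE])
    moreover have "aff_dim P \<le> aff_dim F" by (rule aff_dim_subset) (auto simp: F_def)
    ultimately show False using affP by simp
  qed
  have dir0: "dir {x. f0 x = 0} = {v. a0 \<bullet> v = 0}"
  proof -
    have "{x. f0 x = 0} = {x. a0 \<bullet> x = - c}" using f0 by (auto simp: algebra_simps)
    then show ?thesis using dir_hyp[OF a0] by simp
  qed
  have K: "a0 \<bullet> z \<noteq> 0" if z: "z \<in> C" "z \<noteq> 0" for z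
  proof
    assume za: "a0 \<bullet> z = 0"
    define w where "w = (\<lambda>k. z + inverse (real (Suc k)) *\<^sub>R vs)"
    have wP: "w k \<in> P" for k
    proof -
      have "a H \<bullet> w k = 0" if "H \<in> I" for H
        using that z vsC unfolding w_def I_def by (simp add: inner_add_right)
      moreover have "a H \<bullet> w k > 0" if H: "H \<in> A - I" for H
      proof -
        have "0 \<le> a H \<bullet> z" using z H unfolding C_def by auto
        moreover have "0 < inverse (real (Suc k)) * (a H \<bullet> vs)" using vspos[OF H] by simp
        ultimately show ?thesis unfolding w_def by (simp add: inner_add_right)
      qed
      ultimately show ?thesis unfolding P_def by blast
    qed
    have wl: "w \<longlonglongrightarrow> z"
      unfolding w_def using tendsto_add[OF tendsto_const tendsto_scaleR[OF LIMSEQ_inverse_real_of_nat tendsto_const], of z vs] by simp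
    have "(\<lambda>k. w k /\<^sub>R norm (w k)) \<longlonglongrightarrow> z /\<^sub>R norm z"
      using z(2) by (intro tendsto_intros wl) auto
    moreover have "\<forall>k. w k \<in> \<Sigma> \<and> w k \<noteq> 0" using wP Pnz SF unfolding F_def by blast
    ultimately have "z \<in> inf_set_closure \<Sigma>" unfolding inf_set_closure_def using z(2) by blast
    moreover have "z \<in> dir {x. f0 x = 0}" using za dir0 by simp
    ultimately show False using bf unfolding bounded_face_at_inf_def by blast
  qed
  have u'pos: "a0 \<bullet> u' > 0" using K[OF u'C] r(2) u'a0 by force
  show ?thesis unfolding growing_domain_def
  proof (intro conjI assms(4) assms(5) allI)
    fix M
    show "\<exists>R. \<forall>x\<in>D. R \<le> norm x \<longrightarrow> M \<le> f0 x"
    proof (rule ccontr)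
      assume "\<not> ?thesis"
      then have exx: "\<exists>x. x \<in> D \<and> real (Suc k) \<le> norm x \<and> f0 x < M" for k
        by (auto simp: not_le)
      define x where "x = (\<lambda>k. SOME x. x \<in> D \<and> real (Suc k) \<le> norm x \<and> f0 x < M)"
      have x0': "x k \<in> D \<and> real (Suc k) \<le> norm (x k) \<and> f0 (x k) < M" for k
        unfolding x_def by (rule someI_ex[OF exx])
      have x: "\<And>k. x k \<in> D" "\<And>k. real (Suc k) \<le> norm (x k)" "\<And>k. f0 (x k) < M"
        using x0' by blast+
      obtain s u where s: "strict_mono s" "norm u = 1" "(\<lambda>k. x (s k) /\<^sub>R norm (x (s k))) \<longlonglongrightarrow> u"
        "filterlim (\<lambda>k. norm (x (s k))) at_top sequentially"
        using subseq_dir[OF x(2)] by blast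
      have xQ: "\<And>k. x k \<in> Q" using x(1) unfolding DQ .
      have uC: "u \<in> C" by (rule QC[of "\<lambda>k. x (s k)" u, OF xQ s(4) s(3)])
      have "0 \<le> (-a0) \<bullet> u"
      proof (rule limL[OF _ s(4) s(3)])
        fix k show "c - M \<le> (-a0) \<bullet> x (s k)"
          using x(3)[of "s k"] f0[of "x (s k)"] by simp
      qed
      then have uneg: "a0 \<bullet> u < 0" using K[OF uC] s(2) by force
      define \<alpha> where "\<alpha> = a0 \<bullet> u'"
      define \<beta> where "\<beta> = - (a0 \<bullet> u)"
      have al: "\<alpha> > 0" "\<beta> > 0" using u'pos uneg by (auto simp: \<alpha>_def \<beta>_def)
      define z where "z = \<alpha> *\<^sub>R u + \<beta> *\<^sub>R u'"
      have zC: "z \<in> C" using uC u'C al unfolding C_def z_def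
        by (auto simp: inner_add_right intro!: add_nonneg_nonneg mult_nonneg_nonneg)
      have za: "a0 \<bullet> z = 0" unfolding z_def \<alpha>_def \<beta>_def by (simp add: inner_diff_right inner_add_right mult.commute)
      have "z \<noteq> 0"
      proof
        assume z0: "z = 0"
        have "a H \<bullet> u' = 0" if H: "H \<in> A" for H
        proof -
          have "a H \<bullet> z = \<alpha> * (a H \<bullet> u) + \<beta> * (a H \<bullet> u')"
            unfolding z_def by (simp add: inner_add_right)
          then have eq: "0 = \<alpha> * (a H \<bullet> u) + \<beta> * (a H \<bullet> u')" using z0 by simp
          have h1: "0 \<le> a H \<bullet> u" "0 \<le> a H \<bullet> u'" using uC u'C H unfolding C_def by blast+
          have t1: "0 \<le> \<alpha> * (a H \<bullet> u)" using al h1 by simp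
          have t2: "0 \<le> \<beta> * (a H \<bullet> u')" using al h1 by simp
          have "\<beta> * (a H \<bullet> u') = 0" using t1 t2 eq by linarith
          then show ?thesis using al by simp
        qed
        then have "-u' \<in> C" by (simp add: C_def)
        then show False using pointed[OF u'C] r(2) by simp
      qed
      then show False using K[OF zC] za by simp
    qed
  qed
qed

end
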